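(* Let $P$ be a finite poset and $q$ a positive integer such that every chain of $P$ has at most $q$ elements. Then $\Gamma(P,q)$ is the poset with elements $\{(p,k): p\in P,\ 1+\delta(p)\le k\le q-\nu(p)-1\}$ whose covering relations are $(p_1,k_1)\lessdot(p_2,k_2)$ if and only if either (1) $p_1=p_2$ and $k_1=k_2+1$, or (2) $p_1\lessdot p_2$ in $P$ and $k_1+1=k_2$.
   Context: For $p\in P$, $\delta(p)$ (resp. $\nu(p)$) is the number of elements less (resp. greater) than $p$ in a chain of maximum size containing $p$. $\Gamma(P,q)$ is defined as $\Gamma(P,R)$ for the restriction function $R(p)=\{k\in\mathbb{Z}:1+\delta(p)\le k\le q-\nu(p)\}$. For a restriction function $R$ (each $R(p)$ nonempty finite subset of $\mathbb{Z}$), let $R(p)^*=R(p)\setminus\{\max R(p)\}$, $R(p)_{>k}$ (resp. $R(p)_{<k}$) the smallest (resp. largest) element of $R(p)$ greater (resp. less) than $k$. $\Gamma(P,R)$ is the poset on $\{(p,k):p\in P,k\in R(p)^*\}$ whose order is the reflexive–transitive closure of the relation $(p_1,k_1)\lessdot(p_2,k_2)$ (its covering relations), holding iff either (i) $p_1=p_2$ and $R(p_1)_{>k_2}=k_1$; or (ii) $p_1\lessdot p_2$ in $P$, $k_1=R(p_1)_{<k_2}$, $k_1\ne\max R(p_1)$, and no $k\in R(p_2)$ with $k>k_2$ has $R(p_1)_{<k}=k_1$. *)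

theory Defs
  imports Main
begin

text \<open>A finite poset P is modelled as a finite carrier set P of a type with a
partial order (the order of P is the induced one).\<close>

definition pchain :: "'a::order set \<Rightarrow> 'a set \<Rightarrow> bool" where
  "pchain P C \<longleftrightarrow> C \<subseteq> P \<and> Complete_Partial_Order.chain (\<le>) C"

definition pcover :: "'a::order set \<Rightarrow> 'a \<Rightarrow> 'a \<Rightarrow> bool" where
  "pcover P x y \<longleftrightarrow> x \<in> P \<and> y \<in> P \<and> x < y \<and> \<not> (\<exists>z\<in>P. x < z \<and> z < y)"

definition maxchain_size :: "'a::order set \<Rightarrow> 'a \<Rightarrow> nat" where
  "maxchain_size P p = Max {card C | C. pchain P C \<and> p \<in> C}"

definition delta :: "'a::order set \<Rightarrow> 'a \<Rightarrow> nat" where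
  "delta P p = Max {card {c\<in>C. c < p} | C. pchain P C \<and> p \<in> C \<and> card C = maxchain_size P p}"

definition nu :: "'a::order set \<Rightarrow> 'a \<Rightarrow> nat" where
  "nu P p = Max {card {c\<in>C. p < c} | C. pchain P C \<and> p \<in> C \<and> card C = maxchain_size P p}"

definition is_succ_in :: "int set \<Rightarrow> int \<Rightarrow> int \<Rightarrow> bool" where
  "is_succ_in S k j \<longleftrightarrow> j \<in> S \<and> k < j \<and> (\<forall>i\<in>S. k < i \<longrightarrow> j \<le> i)"

definition is_pred_in :: "int set \<Rightarrow> int \<Rightarrow> int \<Rightarrow> bool" where
  "is_pred_in S k j \<longleftrightarrow> j \<in> S \<and> j < k \<and> (\<forall>i\<in>S. i < k \<longrightarrow> i \<le> j)"

definition Gamma_carrier :: "'a::order set \<Rightarrow> ('a \<Rightarrow> int set) \<Rightarrow> ('a \<times> int) set" where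
  "Gamma_carrier P R = {(p, k). p \<in> P \<and> k \<in> R p - {Max (R p)}}"

definition Gamma_gen :: "'a::order set \<Rightarrow> ('a \<Rightarrow> int set) \<Rightarrow> ('a \<times> int) rel" where
  "Gamma_gen P R = {((p1, k1), (p2, k2)).
     (p1, k1) \<in> Gamma_carrier P R \<and> (p2, k2) \<in> Gamma_carrier P R \<and>
     ((p1 = p2 \<and> is_succ_in (R p1) k2 k1) \<or>
      (pcover P p1 p2 \<and> is_pred_in (R p1) k2 k1 \<and> k1 \<noteq> Max (R p1) \<and>
       \<not> (\<exists>k\<in>R p2. k > k2 \<and> is_pred_in (R p1) k k1)))}"

definition Gamma_le :: "'a::order set \<Rightarrow> ('a \<Rightarrow> int set) \<Rightarrow> ('a \<times> int) rel" where
  "Gamma_le P R = (Gamma_gen P R)\<^sup>*"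

definition Gamma_cover :: "'a::order set \<Rightarrow> ('a \<Rightarrow> int set) \<Rightarrow> 'a \<times> int \<Rightarrow> 'a \<times> int \<Rightarrow> bool" where
  "Gamma_cover P R x y \<longleftrightarrow> x \<in> Gamma_carrier P R \<and> y \<in> Gamma_carrier P R \<and> x \<noteq> y \<and>
     (x, y) \<in> Gamma_le P R \<and>
     \<not> (\<exists>z\<in>Gamma_carrier P R. z \<noteq> x \<and> z \<noteq> y \<and> (x, z) \<in> Gamma_le P R \<and> (z, y) \<in> Gamma_le P R)"

text \<open>The restriction function for Gamma(P,q).\<close>
definition Rq :: "'a::order set \<Rightarrow> int \<Rightarrow> 'a \<Rightarrow> int set" where
  "Rq P q p = {k. 1 + int (delta P p) \<le> k \<and> k \<le> q - int (nu P p)}"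

end

theory Submission
  imports Defs
begin

lemma Max_int_ivl: "(lo::int) \<le> hi \<Longrightarrow> Max {lo..hi} = hi"
  by (rule Max_eqI) auto

locale ivl =
  fixes P :: "'a::order set" and R :: "'a \<Rightarrow> int set" and lo hi :: "'a \<Rightarrow> int"
  assumes R: "\<And>p. p \<in> P \<Longrightarrow> R p = {lo p..hi p} \<and> lo p \<le> hi p"
begin

lemma carrier_char: "Gamma_carrier P R = {(p,k). p \<in> P \<and> lo p \<le> k \<and> k \<le> hi p - 1}"
  unfolding Gamma_carrier_def using R Max_int_ivl by fastforce

lemma gen_char: "((p1,k1),(p2,k2)) \<in> Gamma_gen P R \<longleftrightarrow>
   (p1,k1) \<in> Gamma_carrier P R \<and> (p2,k2) \<in> Gamma_carrier P R \<and>
   ((p1 = p2 \<and> k1 = k2 + 1) \<or> (pcover P p1 p2 \<and> k1 + 1 = k2))"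
proof -
  have A: "(p1 = p2 \<and> is_succ_in (R p1) k2 k1) \<longleftrightarrow> (p1 = p2 \<and> k1 = k2 + 1)"
    if "(p1,k1) \<in> Gamma_carrier P R" "(p2,k2) \<in> Gamma_carrier P R"
  proof -
    have c: "p1 \<in> P" "lo p1 \<le> k1" "k1 \<le> hi p1 - 1" "p2 \<in> P" "lo p2 \<le> k2" "k2 \<le> hi p2 - 1"
      using that unfolding carrier_char by auto
    show ?thesis
    proof
      assume h: "p1 = p2 \<and> is_succ_in (R p1) k2 k1"
      then have "k2 + 1 \<in> R p1" using R[OF c(1)] c by auto
      then show "p1 = p2 \<and> k1 = k2 + 1" using h unfolding is_succ_in_def by force
    next
      assume h: "p1 = p2 \<and> k1 = k2 + 1"
      then show "p1 = p2 \<and> is_succ_in (R p1) k2 k1" using R[OF c(1)] c unfolding is_succ_in_def by auto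
    qed
  qed
  have B: "(pcover P p1 p2 \<and> is_pred_in (R p1) k2 k1 \<and> k1 \<noteq> Max (R p1) \<and>
       \<not> (\<exists>k\<in>R p2. k > k2 \<and> is_pred_in (R p1) k k1)) \<longleftrightarrow> (pcover P p1 p2 \<and> k1 + 1 = k2)"
    if "(p1,k1) \<in> Gamma_carrier P R" "(p2,k2) \<in> Gamma_carrier P R"
  proof -
    have c: "p1 \<in> P" "lo p1 \<le> k1" "k1 \<le> hi p1 - 1" "p2 \<in> P" "lo p2 \<le> k2" "k2 \<le> hi p2 - 1"
      using that unfolding carrier_char by auto
    have M: "Max (R p1) = hi p1" using R[OF c(1)] Max_int_ivl by auto
    show ?thesis
    proof
      assume h: "pcover P p1 p2 \<and> is_pred_in (R p1) k2 k1 \<and> k1 \<noteq> Max (R p1) \<and>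
       \<not> (\<exists>k\<in>R p2. k > k2 \<and> is_pred_in (R p1) k k1)"
      then have "k1 < k2" "k1 + 1 \<in> R p1 \<longrightarrow> k1 + 1 < k2 \<longrightarrow> k1 + 1 \<le> k1"
        unfolding is_pred_in_def by auto
      moreover have "k1 + 1 \<in> R p1" using R[OF c(1)] c by auto
      ultimately show "pcover P p1 p2 \<and> k1 + 1 = k2" using h by linarith
    next
      assume h: "pcover P p1 p2 \<and> k1 + 1 = k2"
      have "k1 + 1 \<in> R p1" using R[OF c(1)] c by auto
      then show "pcover P p1 p2 \<and> is_pred_in (R p1) k2 k1 \<and> k1 \<noteq> Max (R p1) \<and>
       \<not> (\<exists>k\<in>R p2. k > k2 \<and> is_pred_in (R p1) k k1)"
        using h c M R[OF c(1)] unfolding is_pred_in_def by force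
    qed
  qed
  show ?thesis unfolding Gamma_gen_def using A B by auto
qed

lemma gen_irrefl: "(x,x) \<notin> Gamma_gen P R"
  using gen_char[of "fst x" "snd x" "fst x" "snd x"] unfolding pcover_def by auto

lemma inv: "(a,b) \<in> (Gamma_gen P R)\<^sup>* \<Longrightarrow>
   (fst a = fst b \<and> snd b \<le> snd a) \<or> (fst a < fst b \<and> (pcover P (fst a) (fst b) \<longrightarrow> snd b \<le> snd a + 1))"
proof (induction rule: rtrancl_induct)
  case base
  then show ?case by simp
next
  case (step c b)
  obtain c1 c2 b1 b2 where cb: "c = (c1,c2)" "b = (b1,b2)" by fastforce
  from step(2) have g: "(c1,c2) \<in> Gamma_carrier P R" "(b1,b2) \<in> Gamma_carrier P R"
     "(c1 = b1 \<and> c2 = b2 + 1) \<or> (pcover P c1 b1 \<and> c2 + 1 = b2)"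
    unfolding cb gen_char by auto
  show ?case
  proof (cases "c1 = b1 \<and> c2 = b2 + 1")
    case True
    then show ?thesis using step(3) cb by auto
  next
    case False
    then have pc: "pcover P c1 b1" "c2 + 1 = b2" using g by auto
    then have "c1 < b1" "c1 \<in> P" unfolding pcover_def by auto
    from step(3) show ?thesis
    proof
      assume "fst a = fst c \<and> snd c \<le> snd a"
      then show ?thesis using pc \<open>c1 < b1\<close> cb by auto
    next
      assume h: "fst a < fst c \<and> (pcover P (fst a) (fst c) \<longrightarrow> snd c \<le> snd a + 1)"
      then have "\<not> pcover P (fst a) b1" using \<open>c1 < b1\<close> \<open>c1 \<in> P\<close> cb unfolding pcover_def by auto
      then show ?thesis using h \<open>c1 < b1\<close> cb by auto
    qed
  qed
qed

lemma cover_char: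
  assumes x: "x \<in> Gamma_carrier P R" and y: "y \<in> Gamma_carrier P R"
  shows "Gamma_cover P R x y \<longleftrightarrow> (x,y) \<in> Gamma_gen P R"
proof
  assume c: "Gamma_cover P R x y"
  then have xy: "(x,y) \<in> (Gamma_gen P R)\<^sup>*" "x \<noteq> y" unfolding Gamma_cover_def Gamma_le_def by auto
  then obtain z where z: "(x,z) \<in> (Gamma_gen P R)\<^sup>*" "(z,y) \<in> Gamma_gen P R"
    by (metis rtranclE)
  have zc: "z \<in> Gamma_carrier P R" using z(2) gen_char[of "fst z" "snd z" "fst y" "snd y"] by auto
  have "z \<noteq> y" using z(2) gen_irrefl[of y] by metis
  show "(x,y) \<in> Gamma_gen P R"
  proof (cases "z = x")
    case True then show ?thesis using z by simp
  next
    case False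
    then show ?thesis using c zc \<open>z \<noteq> y\<close> z unfolding Gamma_cover_def Gamma_le_def by auto
  qed
next
  assume g: "(x,y) \<in> Gamma_gen P R"
  obtain p1 k1 p2 k2 where xy: "x = (p1,k1)" "y = (p2,k2)" by fastforce
  have g': "(p1 = p2 \<and> k1 = k2 + 1) \<or> (pcover P p1 p2 \<and> k1 + 1 = k2)"
    using g unfolding xy gen_char by auto
  have "\<not> (\<exists>z\<in>Gamma_carrier P R. z \<noteq> x \<and> z \<noteq> y \<and> (x, z) \<in> Gamma_le P R \<and> (z, y) \<in> Gamma_le P R)"
  proof
    assume "\<exists>z\<in>Gamma_carrier P R. z \<noteq> x \<and> z \<noteq> y \<and> (x, z) \<in> Gamma_le P R \<and> (z, y) \<in> Gamma_le P R"
    then obtain z1 z2 where zc: "(z1,z2) \<in> Gamma_carrier P R" and zn: "(z1,z2) \<noteq> x" "(z1,z2) \<noteq> y"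
      and i1: "(fst x = z1 \<and> z2 \<le> snd x) \<or> (fst x < z1 \<and> (pcover P (fst x) z1 \<longrightarrow> z2 \<le> snd x + 1))"
      and i2: "(z1 = fst y \<and> snd y \<le> z2) \<or> (z1 < fst y \<and> (pcover P z1 (fst y) \<longrightarrow> snd y \<le> z2 + 1))"
      unfolding Gamma_le_def using inv by fastforce
    have z1P: "z1 \<in> P" using zc unfolding carrier_char by auto
    from g' show False
    proof
      assume "p1 = p2 \<and> k1 = k2 + 1"
      then show False using i1 i2 zn xy by auto
    next
      assume h: "pcover P p1 p2 \<and> k1 + 1 = k2"
      then have "z1 = p1 \<or> z1 = p2" using i1 i2 xy z1P unfolding pcover_def by auto
      then show False
      proof
        assume "z1 = p1"
        then show False using i1 i2 h xy zn unfolding pcover_def by auto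
      next
        assume "z1 = p2"
        then show False using i1 i2 h xy zn unfolding pcover_def by auto
      qed
    qed
  qed
  moreover have "x \<noteq> y" using g gen_irrefl[of x] by metis
  ultimately show "Gamma_cover P R x y" using x y g unfolding Gamma_cover_def Gamma_le_def by auto
qed

end

lemma dn_bound:
  fixes P :: "'a::order set" and q :: int
  assumes fin: "finite P" and pP: "p \<in> P" and ch: "\<forall>C. pchain P C \<longrightarrow> int (card C) \<le> q"
  shows "int (delta P p) + int (nu P p) + 1 \<le> q"
proof -
  define M where "M = {card C | C. pchain P C \<and> p \<in> C}"
  have "M \<subseteq> card ` Pow P" unfolding M_def pchain_def by auto
  then have fM: "finite M" using fin finite_subset by blast
  have "pchain P {p}" using pP unfolding pchain_def by (auto simp: chain_def)
  then have "M \<noteq> {}" unfolding M_def by blast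
  then have "Max M \<in> M" using fM by (rule Max_in[rotated])
  moreover have "maxchain_size P p = Max M" unfolding maxchain_size_def M_def by simp
  ultimately have "maxchain_size P p \<in> M" by simp
  then obtain C0 where C0: "pchain P C0" "p \<in> C0" "card C0 = maxchain_size P p" unfolding M_def by auto
  define S1 where "S1 = {card {c\<in>C. c < p} | C. pchain P C \<and> p \<in> C \<and> card C = maxchain_size P p}"
  define S2 where "S2 = {card {c\<in>C. p < c} | C. pchain P C \<and> p \<in> C \<and> card C = maxchain_size P p}"
  have "S1 \<subseteq> {..card P}" unfolding S1_def pchain_def
    using fin by (fastforce intro!: card_mono)
  then have f1: "finite S1" using finite_subset by blast
  have "S2 \<subseteq> {..card P}" unfolding S2_def pchain_def
    using fin by (fastforce intro!: card_mono)
  then have f2: "finite S2" using finite_subset by blast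
  have "S1 \<noteq> {}" "S2 \<noteq> {}" unfolding S1_def S2_def using C0 by auto
  then have "Max S1 \<in> S1" "Max S2 \<in> S2" using f1 f2 Max_in by auto
  moreover have "delta P p = Max S1" "nu P p = Max S2" unfolding delta_def nu_def S1_def S2_def by simp_all
  ultimately have "delta P p \<in> S1" "nu P p \<in> S2" by simp_all
  then obtain C1 where C1: "pchain P C1" "card {c\<in>C1. c < p} = delta P p"
    unfolding S1_def by force
  obtain C2 where C2: "pchain P C2" "card {c\<in>C2. p < c} = nu P p"
    using \<open>nu P p \<in> S2\<close> unfolding S2_def by force
  define D where "D = {c\<in>C1. c < p} \<union> {p} \<union> {c\<in>C2. p < c}"
  have fC1: "finite {c\<in>C1. c < p}" using C1 fin unfolding pchain_def by (auto intro: finite_subset)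
  have fC2: "finite {c\<in>C2. p < c}" using C2 fin unfolding pchain_def by (auto intro: finite_subset)
  have d1: "card ({c\<in>C1. c < p} \<union> {p}) = delta P p + 1"
    using fC1 C1(2) by (subst card_Un_disjoint) auto
  have "card D = delta P p + 1 + nu P p" unfolding D_def
    using fC1 fC2 C2(2) d1 by (subst card_Un_disjoint) auto
  moreover have "pchain P D"
  proof -
    have "D \<subseteq> P" using C1 C2 pP unfolding D_def pchain_def by auto
    moreover have "Complete_Partial_Order.chain (\<le>) D"
      unfolding chain_def
    proof (intro ballI)
      fix x y assume "x \<in> D" "y \<in> D"
      then show "x \<le> y \<or> y \<le> x"
      proof -
        have h1: "\<forall>x\<in>C1. \<forall>y\<in>C1. x \<le> y \<or> y \<le> x" using C1(1) unfolding pchain_def chain_def by blast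
        have h2: "\<forall>x\<in>C2. \<forall>y\<in>C2. x \<le> y \<or> y \<le> x" using C2(1) unfolding pchain_def chain_def by blast
        have "x \<in> C1 \<and> x < p \<or> x = p \<or> x \<in> C2 \<and> p < x" "y \<in> C1 \<and> y < p \<or> y = p \<or> y \<in> C2 \<and> p < y"
          using \<open>x \<in> D\<close> \<open>y \<in> D\<close> unfolding D_def by auto
        then show ?thesis using h1 h2
          apply (elim disjE conjE)
          by (simp_all add: order.strict_implies_order)
      qed
    qed
    ultimately show ?thesis unfolding pchain_def by auto
  qed
  ultimately show ?thesis using ch by force
qed

theorem corollary2p22:
  fixes P :: "'a::order set" and q :: int
  assumes "finite P" and "q > 0"
    and "\<forall>C. pchain P C \<longrightarrow> int (card C) \<le> q"
  shows "Gamma_carrier P (Rq P q) =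
           {(p, k). p \<in> P \<and> 1 + int (delta P p) \<le> k \<and> k \<le> q - int (nu P p) - 1}
       \<and> (\<forall>x\<in>Gamma_carrier P (Rq P q). \<forall>y\<in>Gamma_carrier P (Rq P q).
            Gamma_cover P (Rq P q) x y \<longleftrightarrow>
              ((fst x = fst y \<and> snd x = snd y + 1) \<or>
               (pcover P (fst x) (fst y) \<and> snd x + 1 = snd y)))"
proof -
  interpret I: ivl P "Rq P q" "\<lambda>p. 1 + int (delta P p)" "\<lambda>p. q - int (nu P p)"
  proof
    fix p assume "p \<in> P"
    then show "Rq P q p = {1 + int (delta P p)..q - int (nu P p)} \<and> 1 + int (delta P p) \<le> q - int (nu P p)"
      using dn_bound[OF assms(1) _ assms(3)] unfolding Rq_def by force
  qed
  show ?thesis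
  proof
    show "Gamma_carrier P (Rq P q) =
           {(p, k). p \<in> P \<and> 1 + int (delta P p) \<le> k \<and> k \<le> q - int (nu P p) - 1}"
      by (rule I.carrier_char)
  next
    show "\<forall>x\<in>Gamma_carrier P (Rq P q). \<forall>y\<in>Gamma_carrier P (Rq P q).
            Gamma_cover P (Rq P q) x y \<longleftrightarrow>
              ((fst x = fst y \<and> snd x = snd y + 1) \<or>
               (pcover P (fst x) (fst y) \<and> snd x + 1 = snd y))"
    proof (intro ballI)
      fix x y assume x: "x \<in> Gamma_carrier P (Rq P q)" and y: "y \<in> Gamma_carrier P (Rq P q)"
      show "Gamma_cover P (Rq P q) x y \<longleftrightarrow>
              ((fst x = fst y \<and> snd x = snd y + 1) \<or>
               (pcover P (fst x) (fst y) \<and> snd x + 1 = snd y))"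
        using I.cover_char[OF x y] I.gen_char[of "fst x" "snd x" "fst y" "snd y"] x y by simp
    qed
  qed
qed

end
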